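(* Let $A$ be a row-finite $\omega\times\omega$ complex matrix with infinite deficiency, and let $H=(h_{ij})=QA$ be a quasi-Hermite form of $A$ ($Q$ nonsingular row-finite). Let $j_0<j_1<\cdots$ index the nonzero rows of $H$, $\mu_n=\ell(H_{j_n})$, and $S=\omega\setminus\{\mu_0,\mu_1,\dots\}=\{s_0<s_1<\cdots\}$. For $s\in S$ define $\xi^{(s)}\in\mathbb{C}^\omega$ by $\xi^{(s)}_s=1$, $\xi^{(s)}_{\mu_n}=-h_{j_n s}$ for all $n$, and $\xi^{(s)}_t=0$ for $t\in S\setminus\{s\}$. Then $\{\xi^{(s_k)}\}_{k\in\omega}$ is a Schauder basis of $RNS(A)=\{y\in\mathbb{C}^\omega: Ay=0\}$ regarded as a subspace of the Fréchet space $\mathfrak{s}$: every $x\in RNS(A)$ satisfies $x=\sum_{k=0}^{\infty}x_{s_k}\xi^{(s_k)}$ with convergence in $\mathfrak{s}$, and if $x=\sum_{k=0}^\infty z_k\xi^{(s_k)}$ in $\mathfrak{s}$ for some scalars $z_k$, then $z_k=x_{s_k}$ for all $k$.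
   Context: $\omega=\{0,1,2,\dots\}$; $\mathbb{C}^\omega$ is the space of all complex sequences; $(Ay)_n=\sum_k a_{nk}y_k$. $\mathfrak{s}$ denotes $\mathbb{C}^\omega$ with the metric $\varrho(q,p)=\sum_{i\ge0}2^{-i}\frac{|q_i-p_i|}{1+|q_i-p_i|}$ (coordinatewise convergence). Row-finite: finitely many nonzero entries per row; nonsingular: invertible in the algebra of row-finite matrices. Length $\ell(x)$ of a finitely supported $x\neq0$: largest index of a nonzero coordinate. Quasi-Hermite form: with $J$ the indices of nonzero rows and $\ell_j=\ell(H_j)$, (i) $j<j'$ in $J$ implies $\ell_j<\ell_{j'}$; (ii) $h_{j\ell_j}=1$; (iii) $h_{m\ell_j}=0$ for all $m\neq j$. Deficiency: codimension of the row space of $A$ in the space of finitely supported sequences; it equals $\operatorname{card}(S)$. *)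

theory Defs
  imports "HOL-Analysis.Analysis" "HOL-Library.Infinite_Set"
begin

type_synonym cmat = "nat \<Rightarrow> nat \<Rightarrow> complex"
type_synonym cseq = "nat \<Rightarrow> complex"

definition fin_supp :: "cseq \<Rightarrow> bool" where
  "fin_supp x \<longleftrightarrow> finite {k. x k \<noteq> 0}"

definition row_finite :: "cmat \<Rightarrow> bool" where
  "row_finite A \<longleftrightarrow> (\<forall>n. fin_supp (A n))"

definition mat_vec :: "cmat \<Rightarrow> cseq \<Rightarrow> cseq" where
  "mat_vec A y = (\<lambda>n. \<Sum>k\<in>{k. A n k \<noteq> 0}. A n k * y k)"

definition mat_mult :: "cmat \<Rightarrow> cmat \<Rightarrow> cmat" where
  "mat_mult P B = (\<lambda>n k. \<Sum>j\<in>{j. P n j \<noteq> 0}. P n j * B j k)"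

definition id_mat :: cmat where
  "id_mat = (\<lambda>n k. if n = k then 1 else 0)"

definition nonsingular :: "cmat \<Rightarrow> bool" where
  "nonsingular Q \<longleftrightarrow> row_finite Q \<and>
     (\<exists>B. row_finite B \<and> mat_mult B Q = id_mat \<and> mat_mult Q B = id_mat)"

definition row_space :: "cmat \<Rightarrow> cseq set" where
  "row_space A = {(\<lambda>k. \<Sum>j\<in>G. c j * A j k) | G c. finite G}"

text \<open>Infinite deficiency: the row space has infinite codimension in the space of
  finitely supported sequences, i.e. no finite family of finitely supported sequences
  together with the row space spans all finitely supported sequences.\<close>
definition infinite_deficiency :: "cmat \<Rightarrow> bool" where
  "infinite_deficiency A \<longleftrightarrow>
     (\<forall>F. finite F \<and> (\<forall>f\<in>F. fin_supp f) \<longrightarrow>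
        (\<exists>x. fin_supp x \<and>
           \<not> (\<exists>r\<in>row_space A. \<exists>d. x = (\<lambda>k. r k + (\<Sum>f\<in>F. d f * f k)))))"

definition len :: "cseq \<Rightarrow> nat" where
  "len x = Max {k. x k \<noteq> 0}"

definition nonzero_rows :: "cmat \<Rightarrow> nat set" where
  "nonzero_rows H = {j. H j \<noteq> (\<lambda>k. 0)}"

definition quasi_hermite :: "cmat \<Rightarrow> bool" where
  "quasi_hermite H \<longleftrightarrow>
     (\<forall>j\<in>nonzero_rows H. \<forall>j'\<in>nonzero_rows H. j < j' \<longrightarrow> len (H j) < len (H j')) \<and>
     (\<forall>j\<in>nonzero_rows H. H j (len (H j)) = 1) \<and>
     (\<forall>j\<in>nonzero_rows H. \<forall>m. m \<noteq> j \<longrightarrow> H m (len (H j)) = 0)"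

definition RNS :: "cmat \<Rightarrow> cseq set" where
  "RNS A = {y. mat_vec A y = (\<lambda>n. 0)}"

definition pivots :: "cmat \<Rightarrow> nat set" where
  "pivots H = len ` (H ` nonzero_rows H)"

definition free_idx :: "cmat \<Rightarrow> nat set" where
  "free_idx H = UNIV - pivots H"

definition xi :: "cmat \<Rightarrow> nat \<Rightarrow> cseq" where
  "xi H s = (\<lambda>t. if t = s then 1
                 else if t \<in> pivots H
                   then - H (THE j. j \<in> nonzero_rows H \<and> len (H j) = t) s
                 else 0)"

definition rho :: "cseq \<Rightarrow> cseq \<Rightarrow> real" where
  "rho q p = (\<Sum>i. (1/2)^i * (cmod (q i - p i) / (1 + cmod (q i - p i))))"

definition converges_s :: "(nat \<Rightarrow> cseq) \<Rightarrow> cseq \<Rightarrow> bool" where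
  "converges_s f x \<longleftrightarrow> (\<lambda>N. rho (f N) x) \<longlonglongrightarrow> 0"

end

theory Submission
  imports Defs
begin

lemma frac_le1: "0 \<le> (d::real) \<Longrightarrow> d / (1 + d) \<le> 1"
  by (simp add: divide_le_eq)

lemma rho_term_le: "(1/2::real)^i * (cmod (q i - p i) / (1 + cmod (q i - p i))) \<le> (1/2)^i"
  by (rule mult_left_le[OF frac_le1]) auto

lemma rho_term_nn: "0 \<le> (1/2::real)^i * (cmod (q i - p i) / (1 + cmod (q i - p i)))"
  by simp

lemma rho_summable: "summable (\<lambda>i. (1/2::real)^i * (cmod (q i - p i) / (1 + cmod (q i - p i))))"
  by (rule summable_comparison_test[where g="\<lambda>i. (1/2::real)^i"])
     (use rho_term_le in \<open>auto intro!: summable_geometric\<close>)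

lemma rho_ge_term: "(1/2::real)^i * (cmod (q i - p i) / (1 + cmod (q i - p i))) \<le> rho q p"
proof -
  have "sum (\<lambda>i. (1/2::real)^i * (cmod (q i - p i) / (1 + cmod (q i - p i)))) {i} \<le> rho q p"
    unfolding rho_def by (rule sum_le_suminf[OF rho_summable]) auto
  thus ?thesis by simp
qed

lemma converges_s_unique:
  assumes "converges_s f x" and "eventually (\<lambda>N. f N i = c) sequentially"
  shows "c = x i"
proof (rule ccontr)
  assume ne: "c \<noteq> x i"
  define d where "d = cmod (c - x i)"
  have dpos: "d > 0" using ne by (simp add: d_def)
  define \<delta> where "\<delta> = (1/2::real)^i * (d / (1 + d))"
  have \<delta>pos: "\<delta> > 0" using dpos by (simp add: \<delta>_def)
  have "eventually (\<lambda>N. \<delta> \<le> rho (f N) x) sequentially"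
    using assms(2) by eventually_elim (use rho_ge_term[of i] in \<open>auto simp: \<delta>_def d_def\<close>)
  moreover have "eventually (\<lambda>N. rho (f N) x < \<delta>) sequentially"
  proof -
    have "eventually (\<lambda>N. dist (rho (f N) x) 0 < \<delta>) sequentially"
      using assms(1) \<delta>pos unfolding converges_s_def tendsto_iff by blast
    thus ?thesis by eventually_elim auto
  qed
  ultimately have "eventually (\<lambda>N. False) sequentially"
    by eventually_elim auto
  thus False by simp
qed

lemma converges_s_I:
  assumes "\<And>i. eventually (\<lambda>N. f N i = x i) sequentially"
  shows "converges_s f x"
  unfolding converges_s_def tendsto_iff
proof (intro allI impI)
  fix r :: real assume r: "0 < r"
  obtain M where M: "(1/2::real)^M < r/2" using real_arch_pow_inv[of "r/2" "1/2"] r by auto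
  have "eventually (\<lambda>N. \<forall>i\<in>{..<M}. f N i = x i) sequentially"
    by (rule eventually_ball_finite) (use assms in auto)
  then show "eventually (\<lambda>N. dist (rho (f N) x) 0 < r) sequentially"
  proof eventually_elim
    case (elim N)
    define a where "a = (\<lambda>i. (1/2::real)^i * (cmod (f N i - x i) / (1 + cmod (f N i - x i))))"
    have sa: "summable a" unfolding a_def by (rule rho_summable)
    have "rho (f N) x = (\<Sum>i. a (i + M)) + sum a {..<M}"
      unfolding rho_def a_def[symmetric] by (rule suminf_split_initial_segment[OF sa])
    also have "sum a {..<M} = 0" using elim by (auto simp: a_def)
    also have "(\<Sum>i. a (i + M)) \<le> (\<Sum>i. (1/2::real)^(i+M))"
      apply (rule suminf_le)
      using rho_term_le sa summable_ignore_initial_segment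
      by (auto simp: a_def intro!: summable_ignore_initial_segment summable_geometric)
    also have "(\<Sum>i. (1/2::real)^(i+M)) = (1/2)^M * 2"
      by (simp add: power_add suminf_mult2[symmetric] suminf_geometric mult.commute)
    finally have le: "rho (f N) x \<le> (1/2)^M * 2" by simp
    have "0 \<le> rho (f N) x" unfolding rho_def by (rule suminf_nonneg[OF rho_summable]) simp
    thus ?case using le M by simp
  qed
qed

lemma row_finite_mult:
  assumes "row_finite Q" "row_finite A"
  shows "row_finite (mat_mult Q A)"
  unfolding row_finite_def fin_supp_def
proof
  fix n
  let ?K = "\<Union>j\<in>{j. Q n j \<noteq> 0}. {k. A j k \<noteq> 0}"
  have "finite ?K" using assms by (auto simp: row_finite_def fin_supp_def)
  moreover have "{k. mat_mult Q A n k \<noteq> 0} \<subseteq> ?K"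
  proof
    fix k assume "k \<in> {k. mat_mult Q A n k \<noteq> 0}"
    hence "(\<Sum>j\<in>{j. Q n j \<noteq> 0}. Q n j * A j k) \<noteq> 0" by (simp add: mat_mult_def)
    then obtain j where "j \<in> {j. Q n j \<noteq> 0}" "Q n j * A j k \<noteq> 0"
      by (rule sum.not_neutral_contains_not_neutral)
    thus "k \<in> ?K" by auto
  qed
  ultimately show "finite {k. mat_mult Q A n k \<noteq> 0}" by (rule finite_subset[rotated])
qed

lemma sum_supp_ext:
  "finite K \<Longrightarrow> {k. (f k::complex) \<noteq> 0} \<subseteq> K \<Longrightarrow> (\<Sum>k\<in>{k. f k \<noteq> 0}. f k * g k) = (\<Sum>k\<in>K. f k * g k)"
  by (intro sum.mono_neutral_left) auto

lemma mat_vec_assoc: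
  assumes "row_finite Q" "row_finite A"
  shows "mat_vec (mat_mult Q A) x n = mat_vec Q (mat_vec A x) n"
proof -
  let ?J = "{j. Q n j \<noteq> 0}"
  let ?K = "\<Union>j\<in>?J. {k. A j k \<noteq> 0}"
  have fJ: "finite ?J" using assms by (auto simp: row_finite_def fin_supp_def)
  have fK: "finite ?K" using assms by (auto simp: row_finite_def fin_supp_def)
  have sub: "{k. mat_mult Q A n k \<noteq> 0} \<subseteq> ?K"
  proof
    fix k assume "k \<in> {k. mat_mult Q A n k \<noteq> 0}"
    hence "(\<Sum>j\<in>{j. Q n j \<noteq> 0}. Q n j * A j k) \<noteq> 0" by (simp add: mat_mult_def)
    then obtain j where "j \<in> {j. Q n j \<noteq> 0}" "Q n j * A j k \<noteq> 0"
      by (rule sum.not_neutral_contains_not_neutral)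
    thus "k \<in> ?K" by auto
  qed
  have "mat_vec (mat_mult Q A) x n = (\<Sum>k\<in>?K. mat_mult Q A n k * x k)"
    unfolding mat_vec_def by (rule sum_supp_ext[OF fK sub])
  also have "\<dots> = (\<Sum>k\<in>?K. \<Sum>j\<in>?J. Q n j * (A j k * x k))"
    by (simp add: mat_mult_def sum_distrib_right mult.assoc)
  also have "\<dots> = (\<Sum>j\<in>?J. Q n j * (\<Sum>k\<in>?K. A j k * x k))"
    by (subst sum.swap) (simp add: sum_distrib_left)
  also have "\<dots> = (\<Sum>j\<in>?J. Q n j * mat_vec A x j)"
  proof (rule sum.cong[OF refl])
    fix j assume j: "j \<in> ?J"
    have "mat_vec A x j = (\<Sum>k\<in>?K. A j k * x k)"
      unfolding mat_vec_def by (rule sum_supp_ext[OF fK]) (use j in auto)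
    thus "Q n j * (\<Sum>k\<in>?K. A j k * x k) = Q n j * mat_vec A x j" by simp
  qed
  also have "\<dots> = mat_vec Q (mat_vec A x) n" by (simp add: mat_vec_def)
  finally show ?thesis .
qed

lemma RNS_sub:
  assumes "row_finite Q" "row_finite A" "x \<in> RNS A"
  shows "mat_vec (mat_mult Q A) x = (\<lambda>n. 0)"
proof
  fix n
  have "mat_vec A x = (\<lambda>n. 0)" using assms(3) by (simp add: RNS_def)
  moreover have "mat_vec (mat_mult Q A) x n = mat_vec Q (mat_vec A x) n"
    by (rule mat_vec_assoc[OF assms(1,2)])
  ultimately show "mat_vec (mat_mult Q A) x n = 0"
    by (simp add: mat_vec_def)
qed

lemma len_props:
  assumes "fin_supp f" "f \<noteq> (\<lambda>k. 0)"
  shows "f (len f) \<noteq> 0" "f k \<noteq> 0 \<Longrightarrow> k \<le> len f"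
proof -
  have fin: "finite {k. f k \<noteq> 0}" using assms(1) by (simp add: fin_supp_def)
  have ne: "{k. f k \<noteq> 0} \<noteq> {}" using assms(2) by auto
  show "f (len f) \<noteq> 0" using Max_in[OF fin ne] by (simp add: len_def)
  show "f k \<noteq> 0 \<Longrightarrow> k \<le> len f" using Max_ge[OF fin] by (simp add: len_def)
qed

lemma qh_len_inj:
  assumes "quasi_hermite H" "j \<in> nonzero_rows H" "j' \<in> nonzero_rows H" "len (H j) = len (H j')"
  shows "j = j'"
proof (rule ccontr)
  assume "j \<noteq> j'"
  hence "j < j' \<or> j' < j" by auto
  thus False using assms unfolding quasi_hermite_def by force
qed

lemma the_piv:
  assumes "quasi_hermite H" "j \<in> nonzero_rows H"
  shows "(THE j'. j' \<in> nonzero_rows H \<and> len (H j') = len (H j)) = j"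
  by (rule the_equality) (use assms qh_len_inj in auto)

lemma piv_zero:
  assumes "quasi_hermite H" "j \<in> nonzero_rows H" "k \<in> pivots H" "k \<noteq> len (H j)"
  shows "H j k = 0"
proof -
  obtain j' where j': "j' \<in> nonzero_rows H" "k = len (H j')"
    using assms(3) by (auto simp: pivots_def)
  hence "j' \<noteq> j" using assms(4) by auto
  thus ?thesis using assms(1) j' unfolding quasi_hermite_def by auto
qed

lemma xi_piv:
  assumes "quasi_hermite H" "j \<in> nonzero_rows H" "s \<in> free_idx H"
  shows "xi H s (len (H j)) = - H j s"
proof -
  have p: "len (H j) \<in> pivots H" using assms(2) by (auto simp: pivots_def)
  hence "len (H j) \<noteq> s" using assms(3) by (auto simp: free_idx_def)
  thus ?thesis using p the_piv[OF assms(1,2)] by (simp add: xi_def)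
qed

lemma xi_free:
  assumes "t \<in> free_idx H"
  shows "xi H s t = (if t = s then 1 else 0)"
  using assms by (auto simp: xi_def free_idx_def)

lemma infinite_free:
  assumes rfA: "row_finite A" and defi: "infinite_deficiency A" and rfQ: "row_finite Q"
    and HQA: "H = mat_mult Q A" and qh: "quasi_hermite H"
  shows "infinite (free_idx H)"
proof
  let ?S = "free_idx H"
  let ?NZ = "nonzero_rows H"
  assume finS: "finite ?S"
  define e where "e = (\<lambda>s::nat. \<lambda>k::nat. if k = s then (1::complex) else 0)"
  define F where "F = e ` ?S"
  have "finite F \<and> (\<forall>f\<in>F. fin_supp f)"
    using finS by (auto simp: F_def e_def fin_supp_def)
  then obtain x where xfs: "fin_supp x" and
    notrep: "\<not> (\<exists>r\<in>row_space A. \<exists>d. x = (\<lambda>k. r k + (\<Sum>f\<in>F. d f * f k)))"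
    using defi unfolding infinite_deficiency_def by blast
  have rfH: "row_finite H" using row_finite_mult[OF rfQ rfA] HQA by simp
  define J0 where "J0 = {j\<in>?NZ. x (len (H j)) \<noteq> 0}"
  have injJ0: "inj_on (\<lambda>j. len (H j)) J0"
    by (rule inj_onI) (use qh_len_inj[OF qh] in \<open>auto simp: J0_def\<close>)
  have "(\<lambda>j. len (H j)) ` J0 \<subseteq> {k. x k \<noteq> 0}" by (auto simp: J0_def)
  hence "finite ((\<lambda>j. len (H j)) ` J0)"
    using xfs by (auto simp: fin_supp_def intro: finite_subset)
  hence finJ0: "finite J0" using finite_imageD[OF _ injJ0] by blast
  define r where "r = (\<lambda>k. \<Sum>j\<in>J0. x (len (H j)) * H j k)"
  define G where "G = (\<Union>j\<in>J0. {i. Q j i \<noteq> 0})"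
  have finG: "finite G" using finJ0 rfQ by (auto simp: G_def row_finite_def fin_supp_def)
  define c where "c = (\<lambda>i. \<Sum>j\<in>J0. x (len (H j)) * Q j i)"
  have "r = (\<lambda>k. \<Sum>i\<in>G. c i * A i k)"
  proof
    fix k
    have "(\<Sum>i\<in>G. c i * A i k) = (\<Sum>j\<in>J0. x (len (H j)) * (\<Sum>i\<in>G. Q j i * A i k))"
      by (simp add: c_def sum_distrib_right sum_distrib_left mult.assoc sum.swap[of _ G])
    also have "\<dots> = (\<Sum>j\<in>J0. x (len (H j)) * H j k)"
    proof (rule sum.cong[OF refl])
      fix j assume j: "j \<in> J0"
      have "H j k = (\<Sum>i\<in>G. Q j i * A i k)"
        unfolding HQA mat_mult_def by (rule sum_supp_ext[OF finG]) (use j in \<open>auto simp: G_def\<close>)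
      thus "x (len (H j)) * (\<Sum>i\<in>G. Q j i * A i k) = x (len (H j)) * H j k" by simp
    qed
    finally show "r k = (\<Sum>i\<in>G. c i * A i k)" by (simp add: r_def)
  qed
  hence rrow: "r \<in> row_space A" using finG unfolding row_space_def by blast
  define y where "y = (\<lambda>k. x k - r k)"
  have ypiv: "y k = 0" if k: "k \<in> pivots H" for k
  proof -
    obtain j' where j': "j' \<in> ?NZ" "k = len (H j')" using k by (auto simp: pivots_def)
    have "r k = (\<Sum>j\<in>J0. (if j = j' then x k else 0))"
      unfolding r_def
    proof (rule sum.cong[OF refl])
      fix j assume j: "j \<in> J0"
      show "x (len (H j)) * H j k = (if j = j' then x k else 0)"
      proof (cases "j = j'")
        case True thus ?thesis using qh j' unfolding quasi_hermite_def by auto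
      next
        case False thus ?thesis using qh j' unfolding quasi_hermite_def by auto
      qed
    qed
    also have "\<dots> = (if j' \<in> J0 then x k else 0)" using finJ0 by simp
    also have "\<dots> = x k" using j' by (auto simp: J0_def)
    finally show ?thesis by (simp add: y_def)
  qed
  define d where "d = (\<lambda>f::cseq. y (LEAST k. f k \<noteq> 0))"
  have injE: "inj_on e ?S"
    by (rule inj_onI) (metis e_def zero_neq_one)
  have "x = (\<lambda>k. r k + (\<Sum>f\<in>F. d f * f k))"
  proof
    fix k
    have "(\<Sum>f\<in>F. d f * f k) = (\<Sum>s\<in>?S. d (e s) * e s k)"
      unfolding F_def by (rule sum.reindex[OF injE, unfolded comp_def])
    also have "\<dots> = (\<Sum>s\<in>?S. if s = k then y k else 0)"
    proof (rule sum.cong[OF refl])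
      fix s
      have "(LEAST k. e s k \<noteq> 0) = s" by (rule Least_equality) (auto simp: e_def split: if_splits)
      thus "d (e s) * e s k = (if s = k then y k else 0)" by (auto simp: d_def e_def)
    qed
    also have "\<dots> = (if k \<in> ?S then y k else 0)" using finS by simp
    also have "\<dots> = y k" using ypiv by (auto simp: free_idx_def)
    finally show "x k = r k + (\<Sum>f\<in>F. d f * f k)" by (simp add: y_def)
  qed
  thus False using notrep rrow by blast
qed

theorem theorem6:
  fixes A Q H :: cmat
  assumes "row_finite A"
    and "infinite_deficiency A"
    and "nonsingular Q"
    and "H = mat_mult Q A"
    and "quasi_hermite H"
  shows "(\<forall>x\<in>RNS A. converges_s
            (\<lambda>N. \<lambda>t. \<Sum>k<N. x (enumerate (free_idx H) k) * xi H (enumerate (free_idx H) k) t) x)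
       \<and> (\<forall>x\<in>RNS A. \<forall>z::nat \<Rightarrow> complex.
            converges_s (\<lambda>N. \<lambda>t. \<Sum>k<N. z k * xi H (enumerate (free_idx H) k) t) x
            \<longrightarrow> (\<forall>k. z k = x (enumerate (free_idx H) k)))"
proof -
  note rfA = assms(1) and HQA = assms(4) and qh = assms(5)
  have rfQ: "row_finite Q" using assms(3) by (simp add: nonsingular_def)
  have rfH: "row_finite H" using row_finite_mult[OF rfQ rfA] HQA by simp
  let ?S = "free_idx H"
  let ?s = "enumerate ?S"
  have infS: "infinite ?S" by (rule infinite_free[OF rfA assms(2) rfQ HQA qh])
  have sS: "?s k \<in> ?S" for k by (rule enumerate_in_set[OF infS])
  have sm: "strict_mono ?s" by (rule strict_mono_enumerate[OF infS])
  have sinj: "inj ?s" using sm by (rule strict_mono_imp_inj_on)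
  have sge: "k \<le> ?s k" for k using sm by (rule seq_suble)
  have eval_free: "eventually (\<lambda>N. (\<Sum>k<N. z k * xi H (?s k) (?s m)) = z m) sequentially"
    for z :: "nat \<Rightarrow> complex" and m
  proof -
    have "(\<Sum>k<N. z k * xi H (?s k) (?s m)) = z m" if "N \<ge> Suc m" for N
    proof -
      have "(\<Sum>k<N. z k * xi H (?s k) (?s m)) = (\<Sum>k<N. if k = m then z m else 0)"
      proof (rule sum.cong[OF refl])
        fix k
        show "z k * xi H (?s k) (?s m) = (if k = m then z m else 0)"
          using xi_free[OF sS[of m], of "?s k"] sinj by (auto dest: injD)
      qed
      also have "\<dots> = z m" using that by simp
      finally show ?thesis .
    qed
    thus ?thesis unfolding eventually_sequentially by blast
  qed
  show ?thesis
  proof (intro conjI ballI allI impI)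
    fix x z k
    assume "converges_s (\<lambda>N. \<lambda>t. \<Sum>k<N. z k * xi H (?s k) t) x"
    thus "z k = x (?s k)" by (rule converges_s_unique) (rule eval_free)
  next
    fix x assume xR: "x \<in> RNS A"
    have Hx: "mat_vec H x = (\<lambda>n. 0)" using RNS_sub[OF rfQ rfA xR] HQA by simp
    show "converges_s (\<lambda>N. \<lambda>t. \<Sum>k<N. x (?s k) * xi H (?s k) t) x"
    proof (rule converges_s_I)
      fix t
      show "eventually (\<lambda>N. (\<Sum>k<N. x (?s k) * xi H (?s k) t) = x t) sequentially"
      proof (cases "t \<in> ?S")
        case True
        then obtain m where "?s m = t" using enumerate_Ex[OF infS] by blast
        thus ?thesis using eval_free[of "\<lambda>k. x (?s k)" m] by simp
      next
        case False
        hence "t \<in> pivots H" by (simp add: free_idx_def)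
        then obtain j where j: "j \<in> nonzero_rows H" and tj: "t = len (H j)"
          by (auto simp: pivots_def)
        have fsj: "fin_supp (H j)" using rfH by (simp add: row_finite_def)
        have nzj: "H j \<noteq> (\<lambda>k. 0)" using j by (simp add: nonzero_rows_def)
        let ?U = "{u. H j u \<noteq> 0}"
        define g where "g = (\<lambda>u. H j u * x u)"
        have finU: "finite ?U" using fsj by (simp add: fin_supp_def)
        have Ht: "H j t = 1" using qh j tj unfolding quasi_hermite_def by auto
        have "(\<Sum>u\<in>?U. g u) = 0" using Hx unfolding g_def mat_vec_def by meson
        moreover have "(\<Sum>u\<in>?U. g u) = g t + (\<Sum>u\<in>?U - {t}. g u)"
          using finU Ht by (simp add: sum.remove)
        ultimately have rest: "(\<Sum>u\<in>?U - {t}. g u) = - x t" using Ht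
          by (simp add: g_def add_eq_0_iff)
        have "(\<Sum>k<N. x (?s k) * xi H (?s k) t) = x t" if N: "N \<ge> Suc t" for N
        proof -
          have "(\<Sum>k<N. x (?s k) * xi H (?s k) t) = (\<Sum>k<N. - g (?s k))"
            using xi_piv[OF qh j sS] tj by (simp add: g_def mult.commute)
          also have "\<dots> = - (\<Sum>u\<in>?s ` {..<N}. g u)"
            by (simp add: sum_negf sum.reindex[OF inj_on_subset[OF sinj]])
          also have "(\<Sum>u\<in>?s ` {..<N}. g u) = (\<Sum>u\<in>?U - {t}. g u)"
          proof (rule sum.mono_neutral_right)
            show "finite (?s ` {..<N})" by simp
            show "?U - {t} \<subseteq> ?s ` {..<N}"
            proof
              fix u assume u: "u \<in> ?U - {t}"
              hence "u \<notin> pivots H" using piv_zero[OF qh j] tj by auto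
              hence "u \<in> ?S" by (simp add: free_idx_def)
              then obtain k where k: "?s k = u" using enumerate_Ex[OF infS] by blast
              have "u \<le> t" using u len_props(2)[OF fsj nzj] tj by auto
              hence "k < N" using sge[of k] k N by simp
              thus "u \<in> ?s ` {..<N}" using k by blast
            qed
            show "\<forall>i\<in>?s ` {..<N} - (?U - {t}). g i = 0"
              using False sS by (auto simp: g_def)
          qed
          finally show ?thesis using rest by simp
        qed
        thus ?thesis unfolding eventually_sequentially by blast
      qed
    qed
  qed
qed

end
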